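(* Let $\Xi$ be a standard manageable groupoid with unit space $X$ and main orbit $X_0$. Then the map $(\mathrm r,\mathrm d):\Xi(X_0)\to X_0\times X_0$, $\xi\mapsto(\mathrm r(\xi),\mathrm d(\xi))$, is a homeomorphism.
   Context: Manageable groupoid: Hausdorff locally compact $\sigma$-compact groupoid with compact unit space $X$, étale and amenable. It is standard if there is a closed invariant subset $X_\infty\subset X$ such that $X_0:=X\setminus X_\infty$ is a dense orbit (for the equivalence relation $x\cong y$ iff some $\xi$ has $\mathrm d(\xi)=x$, $\mathrm r(\xi)=y$), the isotropy groups $\Xi^z_z=\{\xi:\mathrm r(\xi)=z=\mathrm d(\xi)\}$ are trivial for $z\in X_0$, and $\Xi(X_0)=\{\xi:\mathrm r(\xi),\mathrm d(\xi)\in X_0\}$ is second countable in the subspace topology. $X_0$ is called the main orbit. *)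

theory Defs
  imports "HOL-Analysis.Analysis"
begin

text \<open>A groupoid is given by a topology \<open>G\<close> on the arrows (carrier \<open>topspace G\<close>),
  a unit space \<open>U \<subseteq> topspace G\<close>, range and source maps \<open>r\<close>, \<open>d\<close>,
  a partial multiplication \<open>m\<close> (defined on pairs with \<open>d a = r b\<close>) and an inversion \<open>i\<close>.\<close>

definition composable :: "'a topology \<Rightarrow> ('a \<Rightarrow> 'a) \<Rightarrow> ('a \<Rightarrow> 'a) \<Rightarrow> ('a \<times> 'a) set" where
  "composable G r d = {(a, b). a \<in> topspace G \<and> b \<in> topspace G \<and> d a = r b}"

definition groupoid ::
  "'a topology \<Rightarrow> 'a set \<Rightarrow> ('a \<Rightarrow> 'a) \<Rightarrow> ('a \<Rightarrow> 'a) \<Rightarrow> ('a \<Rightarrow> 'a \<Rightarrow> 'a) \<Rightarrow> ('a \<Rightarrow> 'a) \<Rightarrow> bool" where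
  "groupoid G U r d m i \<longleftrightarrow>
     U \<subseteq> topspace G \<and>
     (\<forall>a\<in>topspace G. r a \<in> U \<and> d a \<in> U) \<and>
     (\<forall>x\<in>U. r x = x \<and> d x = x) \<and>
     (\<forall>a\<in>topspace G. \<forall>b\<in>topspace G. d a = r b \<longrightarrow>
        m a b \<in> topspace G \<and> r (m a b) = r a \<and> d (m a b) = d b) \<and>
     (\<forall>a\<in>topspace G. \<forall>b\<in>topspace G. \<forall>c\<in>topspace G. d a = r b \<and> d b = r c \<longrightarrow>
        m (m a b) c = m a (m b c)) \<and>
     (\<forall>a\<in>topspace G. m (r a) a = a \<and> m a (d a) = a) \<and>
     (\<forall>a\<in>topspace G. i a \<in> topspace G \<and> r (i a) = d a \<and> d (i a) = r a \<and>
        m a (i a) = r a \<and> m (i a) a = d a)"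

definition topological_groupoid ::
  "'a topology \<Rightarrow> 'a set \<Rightarrow> ('a \<Rightarrow> 'a) \<Rightarrow> ('a \<Rightarrow> 'a) \<Rightarrow> ('a \<Rightarrow> 'a \<Rightarrow> 'a) \<Rightarrow> ('a \<Rightarrow> 'a) \<Rightarrow> bool" where
  "topological_groupoid G U r d m i \<longleftrightarrow>
     groupoid G U r d m i \<and>
     continuous_map (subtopology (prod_topology G G) (composable G r d)) G (\<lambda>(a, b). m a b) \<and>
     continuous_map G G i \<and>
     continuous_map G (subtopology G U) r \<and>
     continuous_map G (subtopology G U) d"

definition etale_groupoid ::
  "'a topology \<Rightarrow> 'a set \<Rightarrow> ('a \<Rightarrow> 'a) \<Rightarrow> ('a \<Rightarrow> 'a) \<Rightarrow> ('a \<Rightarrow> 'a \<Rightarrow> 'a) \<Rightarrow> ('a \<Rightarrow> 'a) \<Rightarrow> bool" where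
  "etale_groupoid G U r d m i \<longleftrightarrow>
     topological_groupoid G U r d m i \<and>
     (\<forall>\<xi>\<in>topspace G. \<exists>V. openin G V \<and> \<xi> \<in> V \<and>
        openin (subtopology G U) (r ` V) \<and>
        homeomorphic_map (subtopology G V) (subtopology G (r ` V)) r)"

definition rfib :: "'a topology \<Rightarrow> ('a \<Rightarrow> 'a) \<Rightarrow> 'a \<Rightarrow> 'a set" where
  "rfib G r x = {h \<in> topspace G. r h = x}"

text \<open>A net is represented by its image filter \<open>F\<close> on the function space (proper filter).\<close>
definition amenable_groupoid ::
  "'a topology \<Rightarrow> 'a set \<Rightarrow> ('a \<Rightarrow> 'a) \<Rightarrow> ('a \<Rightarrow> 'a) \<Rightarrow> ('a \<Rightarrow> 'a \<Rightarrow> 'a) \<Rightarrow> ('a \<Rightarrow> 'a) \<Rightarrow> bool" where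
  "amenable_groupoid G U r d m i \<longleftrightarrow>
     (\<exists>F :: ('a \<Rightarrow> real) filter. F \<noteq> bot \<and>
        (\<forall>\<^sub>F g in F. continuous_map G euclideanreal g \<and> (\<forall>h\<in>topspace G. g h \<ge> 0) \<and>
                     compactin G (G closure_of {h \<in> topspace G. g h \<noteq> 0})) \<and>
        (\<forall>K e. compactin G K \<and> K \<subseteq> U \<and> e > 0 \<longrightarrow>
           (\<forall>\<^sub>F g in F. \<forall>x\<in>K. \<bar>infsum g (rfib G r x) - 1\<bar> < e)) \<and>
        (\<forall>K e. compactin G K \<and> e > 0 \<longrightarrow>
           (\<forall>\<^sub>F g in F. \<forall>\<xi>\<in>K.
              infsum (\<lambda>h. \<bar>g (m (i \<xi>) h) - g h\<bar>) (rfib G r (r \<xi>)) < e)))"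

definition sigma_compact_space :: "'a topology \<Rightarrow> bool" where
  "sigma_compact_space G \<longleftrightarrow>
     (\<exists>\<C>. countable \<C> \<and> (\<forall>C\<in>\<C>. compactin G C) \<and> \<Union>\<C> = topspace G)"

definition manageable_groupoid ::
  "'a topology \<Rightarrow> 'a set \<Rightarrow> ('a \<Rightarrow> 'a) \<Rightarrow> ('a \<Rightarrow> 'a) \<Rightarrow> ('a \<Rightarrow> 'a \<Rightarrow> 'a) \<Rightarrow> ('a \<Rightarrow> 'a) \<Rightarrow> bool" where
  "manageable_groupoid G U r d m i \<longleftrightarrow>
     etale_groupoid G U r d m i \<and> amenable_groupoid G U r d m i \<and>
     Hausdorff_space G \<and> locally_compact_space G \<and> sigma_compact_space G \<and>
     compactin G U"

definition orbit_equiv :: "'a topology \<Rightarrow> ('a \<Rightarrow> 'a) \<Rightarrow> ('a \<Rightarrow> 'a) \<Rightarrow> 'a \<Rightarrow> 'a \<Rightarrow> bool" where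
  "orbit_equiv G r d x y \<longleftrightarrow> (\<exists>\<xi>\<in>topspace G. d \<xi> = x \<and> r \<xi> = y)"

definition reduction :: "'a topology \<Rightarrow> ('a \<Rightarrow> 'a) \<Rightarrow> ('a \<Rightarrow> 'a) \<Rightarrow> 'a set \<Rightarrow> 'a set" where
  "reduction G r d A = {\<xi> \<in> topspace G. r \<xi> \<in> A \<and> d \<xi> \<in> A}"

text \<open>Standardness witnessed by the closed invariant set \<open>Xinf\<close>; the main orbit is \<open>U - Xinf\<close>.\<close>
definition standard_wrt ::
  "'a topology \<Rightarrow> 'a set \<Rightarrow> ('a \<Rightarrow> 'a) \<Rightarrow> ('a \<Rightarrow> 'a) \<Rightarrow> 'a set \<Rightarrow> bool" where
  "standard_wrt G U r d Xinf \<longleftrightarrow>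
     Xinf \<subseteq> U \<and> closedin (subtopology G U) Xinf \<and>
     (\<forall>x\<in>Xinf. \<forall>y. orbit_equiv G r d x y \<longrightarrow> y \<in> Xinf) \<and>
     (\<exists>x0\<in>U - Xinf. U - Xinf = {y. orbit_equiv G r d x0 y}) \<and>
     (subtopology G U) closure_of (U - Xinf) = U \<and>
     (\<forall>z\<in>U - Xinf. {\<xi> \<in> topspace G. r \<xi> = z \<and> d \<xi> = z} = {z}) \<and>
     second_countable (subtopology G (reduction G r d (U - Xinf)))"

end

theory Submission
  imports Defs
begin

theorem lemma7p2:
  fixes G :: "'a topology" and U Xinf X0 :: "'a set"
    and r d :: "'a \<Rightarrow> 'a" and m :: "'a \<Rightarrow> 'a \<Rightarrow> 'a" and i :: "'a \<Rightarrow> 'a"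
  assumes "manageable_groupoid G U r d m i"
    and "standard_wrt G U r d Xinf"
    and "X0 = U - Xinf"
  shows "homeomorphic_map (subtopology G (reduction G r d X0))
           (prod_topology (subtopology G X0) (subtopology G X0)) (\<lambda>\<xi>. (r \<xi>, d \<xi>))"
proof -
  let ?T = "topspace G"
  have gp: "groupoid G U r d m i" and tg: "topological_groupoid G U r d m i"
    and ET: "\<forall>\<xi>\<in>?T. \<exists>V. openin G V \<and> \<xi> \<in> V \<and>
        openin (subtopology G U) (r ` V) \<and>
        homeomorphic_map (subtopology G V) (subtopology G (r ` V)) r"
    and HG: "Hausdorff_space G" and cU: "compactin G U"
    using assms(1) unfolding manageable_groupoid_def etale_groupoid_def topological_groupoid_def
    by auto
  have UT: "U \<subseteq> ?T" and rdU: "\<And>a. a \<in> ?T \<Longrightarrow> r a \<in> U \<and> d a \<in> U"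
    and units: "\<And>x. x \<in> U \<Longrightarrow> r x = x \<and> d x = x"
    and mcl: "\<And>a b. a \<in> ?T \<Longrightarrow> b \<in> ?T \<Longrightarrow> d a = r b \<Longrightarrow> m a b \<in> ?T \<and> r (m a b) = r a \<and> d (m a b) = d b"
    and assoc: "\<And>a b c. a \<in> ?T \<Longrightarrow> b \<in> ?T \<Longrightarrow> c \<in> ?T \<Longrightarrow> d a = r b \<Longrightarrow> d b = r c \<Longrightarrow> m (m a b) c = m a (m b c)"
    and unitl: "\<And>a. a \<in> ?T \<Longrightarrow> m (r a) a = a \<and> m a (d a) = a"
    and inv: "\<And>a. a \<in> ?T \<Longrightarrow> i a \<in> ?T \<and> r (i a) = d a \<and> d (i a) = r a \<and> m a (i a) = r a \<and> m (i a) a = d a"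
    using gp unfolding groupoid_def by blast+
  have ci: "continuous_map G G i" and cd: "continuous_map G (subtopology G U) d"
    using tg unfolding topological_groupoid_def by auto
  have st: "Xinf \<subseteq> U" "closedin (subtopology G U) Xinf"
    and inv_inf: "\<And>x y. x \<in> Xinf \<Longrightarrow> orbit_equiv G r d x y \<Longrightarrow> y \<in> Xinf"
    and iso: "\<And>z. z \<in> X0 \<Longrightarrow> {\<xi> \<in> ?T. r \<xi> = z \<and> d \<xi> = z} = {z}"
    and sc: "second_countable (subtopology G (reduction G r d X0))"
    using assms(2,3) unfolding standard_wrt_def by auto
  obtain x0 where x0: "x0 \<in> X0" and orb: "X0 = {y. orbit_equiv G r d x0 y}"
    using assms(2,3) unfolding standard_wrt_def by auto
  have ii: "i (i a) = a" if a: "a \<in> ?T" for a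
  proof -
    have T1: "i a \<in> ?T" "i (i a) \<in> ?T" using inv a by auto
    have "i (i a) = m (i (i a)) (d a)" using unitl[OF T1(2)] inv a by auto
    also have "\<dots> = m (i (i a)) (m (i a) a)" using inv a by auto
    also have "\<dots> = m (m (i (i a)) (i a)) a" using assoc[OF T1(2) T1(1) a] inv a by auto
    also have "\<dots> = m (r a) a" using inv[OF T1(1)] inv a by auto
    also have "\<dots> = a" using unitl a by auto
    finally show ?thesis .
  qed
  have rdisc: "\<exists>V. openin G V \<and> \<eta> \<in> V \<and> inj_on r V" if eta: "\<eta> \<in> ?T" for \<eta>
  proof -
    obtain V where V: "openin G V" "\<eta> \<in> V" "homeomorphic_map (subtopology G V) (subtopology G (r ` V)) r"
      using bspec[OF ET eta] by blast
    then have "inj_on r (topspace (subtopology G V))" using homeomorphic_imp_injective_map by blast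
    moreover have "topspace (subtopology G V) = V" using V(1) openin_subset by auto
    ultimately show ?thesis using V by auto
  qed
  have key: "openin G {\<xi>}" if \<xi>: "\<xi> \<in> ?T" and iso1: "openin (subtopology G U) {d \<xi>}" for \<xi>
  proof -
    define x where "x = d \<xi>"
    have W1: "openin G {\<zeta> \<in> ?T. d \<zeta> \<in> {x}}"
      using openin_continuous_map_preimage[OF cd] iso1 x_def by blast
    obtain V where V: "openin G V" "i \<xi> \<in> V" "inj_on r V" using rdisc inv \<xi> by blast
    have O: "openin G {\<zeta> \<in> ?T. i \<zeta> \<in> V}"
      using openin_continuous_map_preimage[OF ci V(1)] by blast
    have sub: "\<zeta> = \<xi>" if z: "\<zeta> \<in> ?T" "d \<zeta> = x" "i \<zeta> \<in> V" for \<zeta>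
    proof -
      have "r (i \<zeta>) = r (i \<xi>)" using inv z \<xi> x_def by auto
      then have "i \<zeta> = i \<xi>" using V(3) z(3) V(2) by (meson inj_onD)
      then show "\<zeta> = \<xi>" using ii z(1) \<xi> by metis
    qed
    have "{\<zeta> \<in> ?T. d \<zeta> \<in> {x}} \<inter> {\<zeta> \<in> ?T. i \<zeta> \<in> V} = {\<xi>}"
      using sub \<xi> V x_def by auto
    then show ?thesis using W1 O by (metis openin_Int)
  qed
  have key2: "openin (subtopology G U) {r \<xi>}" if \<xi>: "\<xi> \<in> ?T" and o: "openin G {\<xi>}" for \<xi>
  proof -
    obtain V where V: "openin G V" "\<xi> \<in> V" "openin (subtopology G U) (r ` V)"
       "homeomorphic_map (subtopology G V) (subtopology G (r ` V)) r"
      using bspec[OF ET \<xi>] by blast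
    have om: "open_map (subtopology G V) (subtopology G (r ` V)) r"
      using V(4) homeomorphic_imp_open_map by blast
    have "openin (subtopology G V) {\<xi>}" using o V(2) by (simp add: subset_openin_subtopology)
    then have "openin (subtopology G (r ` V)) (r ` {\<xi>})" using om unfolding open_map_def by blast
    then have "openin (subtopology (subtopology G U) (r ` V)) {r \<xi>}"
    proof -
      have "V \<subseteq> ?T" using V(1) openin_subset by blast
      then have "r ` V \<subseteq> U" using rdU by blast
      then have "subtopology (subtopology G U) (r ` V) = subtopology G (r ` V)"
        by (simp add: subtopology_subtopology Int_absorb1)
      then show ?thesis using \<open>openin (subtopology G (r ` V)) (r ` {\<xi>})\<close> by simp
    qed
    then show ?thesis using openin_trans_full V(3) by blast
  qed
  have X0U: "X0 \<subseteq> U" using assms(3) by auto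
  have X0T: "X0 \<subseteq> ?T" using X0U UT by auto
  have arr: "\<exists>\<alpha>\<in>?T. d \<alpha> = x0 \<and> r \<alpha> = y" if "y \<in> X0" for y
    using that orb unfolding orbit_equiv_def by blast
  have inX0: "y \<in> X0" if "\<alpha> \<in> ?T" "d \<alpha> = x0" "r \<alpha> = y" for \<alpha> y
    using that orb unfolding orbit_equiv_def by blast
  define S where "S = {\<eta> \<in> ?T. r \<eta> = x0}"
  have dS: "d \<eta> \<in> X0" if "\<eta> \<in> S" for \<eta>
    using inX0[of "i \<eta>" "d \<eta>"] inv that S_def by auto
  have SX0: "X0 = d ` S"
  proof
    show "X0 \<subseteq> d ` S"
    proof
      fix y assume y: "y \<in> X0"
      then obtain \<alpha> where a: "\<alpha> \<in> ?T" "d \<alpha> = x0" "r \<alpha> = y" using arr by blast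
      then have "i \<alpha> \<in> S" "d (i \<alpha>) = y" using inv S_def by auto
      then show "y \<in> d ` S" by (metis image_eqI)
    qed
  qed (use dS in auto)
  define red where "red = reduction G r d X0"
  have redT: "red \<subseteq> ?T" unfolding red_def reduction_def by auto
  have Sred: "S \<subseteq> red" using dS x0 unfolding S_def red_def reduction_def by auto
  obtain B where B: "countable B" "\<forall>V\<in>B. openin (subtopology G red) V"
    "\<forall>W x. openin (subtopology G red) W \<and> x \<in> W \<longrightarrow> (\<exists>V\<in>B. x \<in> V \<and> V \<subseteq> W)"
    using sc unfolding second_countable_def red_def by blast
  have bex: "\<exists>b\<in>B. b \<inter> S = {\<eta>}" if eta: "\<eta> \<in> S" for \<eta>
  proof -
    obtain V where V: "openin G V" "\<eta> \<in> V" "inj_on r V" using rdisc eta S_def by blast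
    have "openin (subtopology G red) (V \<inter> red)" using V(1) openin_subtopology by blast
    moreover have "\<eta> \<in> V \<inter> red" using V eta Sred by auto
    ultimately obtain b where b: "b \<in> B" "\<eta> \<in> b" "b \<subseteq> V \<inter> red" using B(3) by blast
    have "b \<inter> S = {\<eta>}"
    proof -
      have "\<zeta> = \<eta>" if zz: "\<zeta> \<in> b" "\<zeta> \<in> S" for \<zeta>
      proof -
        have "\<zeta> \<in> V" using zz(1) b(3) by blast
        moreover have "r \<zeta> = r \<eta>" using zz(2) eta unfolding S_def by simp
        ultimately show ?thesis using inj_onD[OF V(3)] V(2) by blast
      qed
      then show ?thesis using b(2) eta by blast
    qed
    then show ?thesis using b by blast
  qed
  define f where "f \<eta> = (SOME b. b \<in> B \<and> b \<inter> S = {\<eta>})" for \<eta>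
  have f: "f \<eta> \<in> B \<and> f \<eta> \<inter> S = {\<eta>}" if "\<eta> \<in> S" for \<eta>
  proof -
    have "\<exists>b. b \<in> B \<and> b \<inter> S = {\<eta>}" using bex[OF that] by blast
    then show ?thesis unfolding f_def by (rule someI_ex)
  qed
  have "inj_on f S"
  proof (rule inj_onI)
    fix a b assume ab: "a \<in> S" "b \<in> S" "f a = f b"
    have "{a} = f a \<inter> S" using f[OF ab(1)] by simp
    also have "\<dots> = f b \<inter> S" using ab(3) by simp
    also have "\<dots> = {b}" using f[OF ab(2)] by simp
    finally show "a = b" by simp
  qed
  moreover have "countable (f ` S)"
  proof (rule countable_subset[OF _ B(1)])
    show "f ` S \<subseteq> B" using f by blast
  qed
  ultimately have "countable S" using countable_image_inj_on by blast
  then have cX0: "countable X0" using SX0 by simp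
  have UT2: "topspace (subtopology G U) = U" using UT by auto
  have oX0: "openin (subtopology G U) X0"
  proof -
    have "openin (subtopology G U) (topspace (subtopology G U) - Xinf)"
      using st(2) by blast
    then show ?thesis using UT2 assms(3) by simp
  qed
  have sub0: "subtopology (subtopology G U) X0 = subtopology G X0"
    using X0U by (simp add: subtopology_subtopology Int_absorb1)
  have HU: "Hausdorff_space (subtopology G U)" using HG Hausdorff_space_subtopology by blast
  have lcU: "locally_compact_space (subtopology G U)"
    using cU compact_space_subtopology compact_imp_locally_compact_space by blast
  have lc0: "locally_compact_space (subtopology G X0)"
    using locally_compact_space_open_subset[OF _ lcU oX0] HU sub0 by metis
  have H0: "Hausdorff_space (subtopology G X0)" using HG Hausdorff_space_subtopology by blast
  have rg0: "regular_space (subtopology G X0)"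
    using locally_compact_Hausdorff_imp_regular_space lc0 H0 by blast
  have top0: "topspace (subtopology G X0) = X0" using X0T by auto
  have "\<exists>y\<in>X0. subtopology G X0 interior_of {y} \<noteq> {}"
  proof (rule ccontr)
    assume nn: "\<not> ?thesis"
    have "subtopology G X0 interior_of \<Union>((\<lambda>y. {y}) ` X0) = {}"
    proof (rule Baire_category_alt)
      show "completely_metrizable_space (subtopology G X0) \<or>
        locally_compact_space (subtopology G X0) \<and> regular_space (subtopology G X0)"
        using lc0 rg0 by blast
      show "countable ((\<lambda>y. {y}) ` X0)" using cX0 by simp
      fix T assume "T \<in> (\<lambda>y. {y}) ` X0"
      then obtain y where y: "y \<in> X0" "T = {y}" by blast
      show "closedin (subtopology G X0) T \<and> subtopology G X0 interior_of T = {}"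
        using y nn closedin_t1_singleton[OF Hausdorff_imp_t1_space[OF H0]] top0 by auto
    qed
    moreover have "\<Union>((\<lambda>y. {y}) ` X0) = topspace (subtopology G X0)" using top0 by auto
    ultimately have "subtopology G X0 interior_of topspace (subtopology G X0) = {}"
      by (simp only:)
    then show False using x0 top0 interior_of_topspace by (metis empty_iff)
  qed
  then obtain y1 where y1: "y1 \<in> X0" "subtopology G X0 interior_of {y1} \<noteq> {}" by blast
  have "subtopology G X0 interior_of {y1} = {y1}"
    using y1(2) interior_of_subset[of "subtopology G X0" "{y1}"] subset_singletonD by blast
  then have "openin (subtopology G X0) {y1}" by (metis openin_interior_of)
  then have oy1: "openin (subtopology G U) {y1}"
    using openin_trans_full[OF _ oX0] sub0 by metis
  have isol: "openin (subtopology G U) {z}" if z: "z \<in> X0" for z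
  proof -
    obtain \<alpha> where a: "\<alpha> \<in> ?T" "d \<alpha> = x0" "r \<alpha> = y1" using arr y1(1) by blast
    obtain \<beta> where b: "\<beta> \<in> ?T" "d \<beta> = x0" "r \<beta> = z" using arr z by blast
    define \<xi> where "\<xi> = m \<beta> (i \<alpha>)"
    have ia: "i \<alpha> \<in> ?T" "r (i \<alpha>) = x0" "d (i \<alpha>) = y1" using inv a by auto
    have xi: "\<xi> \<in> ?T" "r \<xi> = z" "d \<xi> = y1"
      using mcl[OF b(1) ia(1)] b ia unfolding \<xi>_def by auto
    show ?thesis using key2[OF xi(1) key[OF xi(1)]] oy1 xi by simp
  qed
  have dred: "subtopology G red = discrete_topology red"
  proof -
    have "openin (subtopology G red) {\<xi>}" if "\<xi> \<in> red" for \<xi>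
    proof -
      have "\<xi> \<in> ?T" "d \<xi> \<in> X0" using that unfolding red_def reduction_def by auto
      then have "openin G {\<xi>}" using key isol by blast
      then show ?thesis using that subset_openin_subtopology by blast
    qed
    moreover have "topspace (subtopology G red) = red" using redT by auto
    ultimately have "discrete_topology red = subtopology G red"
      unfolding discrete_topology_unique by blast
    then show ?thesis by simp
  qed
  have d0: "subtopology G X0 = discrete_topology X0"
  proof -
    have "openin (subtopology G X0) {z}" if "z \<in> X0" for z
      using isol[OF that] that subset_openin_subtopology sub0 by (metis empty_subsetI insert_subset)
    moreover have "topspace (subtopology G X0) = X0" using X0T by auto
    ultimately have "discrete_topology X0 = subtopology G X0"
      unfolding discrete_topology_unique by blast
    then show ?thesis by simp
  qed
  have inj: "inj_on (\<lambda>\<xi>. (r \<xi>, d \<xi>)) red"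
  proof (rule inj_onI)
    fix \<xi> \<eta> assume xi: "\<xi> \<in> red" and eta: "\<eta> \<in> red" and eq: "(r \<xi>, d \<xi>) = (r \<eta>, d \<eta>)"
    have T: "\<xi> \<in> ?T" "\<eta> \<in> ?T" and dx: "d \<xi> \<in> X0" using xi eta unfolding red_def reduction_def by auto
    have ie: "i \<eta> \<in> ?T" "r (i \<eta>) = d \<eta>" "d (i \<eta>) = r \<eta>" using inv T by auto
    define \<zeta> where "\<zeta> = m (i \<eta>) \<xi>"
    have z: "\<zeta> \<in> ?T" "r \<zeta> = d \<xi>" "d \<zeta> = d \<xi>"
      using mcl[OF ie(1) T(1)] ie eq unfolding \<zeta>_def by auto
    then have "\<zeta> = d \<xi>" using iso[OF dx] by blast
    have "\<eta> = m \<eta> (d \<eta>)" using unitl T by auto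
    also have "\<dots> = m \<eta> \<zeta>" using \<open>\<zeta> = d \<xi>\<close> eq by simp
    also have "\<dots> = m (m \<eta> (i \<eta>)) \<xi>"
      unfolding \<zeta>_def using assoc[OF T(2) ie(1) T(1)] ie eq by auto
    also have "\<dots> = m (r \<xi>) \<xi>" using inv T eq by auto
    also have "\<dots> = \<xi>" using unitl T by auto
    finally show "\<xi> = \<eta>" by simp
  qed
  have img: "(\<lambda>\<xi>. (r \<xi>, d \<xi>)) ` red = X0 \<times> X0"
  proof
    show "(\<lambda>\<xi>. (r \<xi>, d \<xi>)) ` red \<subseteq> X0 \<times> X0" unfolding red_def reduction_def by auto
    show "X0 \<times> X0 \<subseteq> (\<lambda>\<xi>. (r \<xi>, d \<xi>)) ` red"
    proof clarify
      fix y z assume y: "y \<in> X0" and z: "z \<in> X0"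
      obtain \<alpha> where a: "\<alpha> \<in> ?T" "d \<alpha> = x0" "r \<alpha> = z" using arr z by blast
      obtain \<beta> where b: "\<beta> \<in> ?T" "d \<beta> = x0" "r \<beta> = y" using arr y by blast
      define \<xi> where "\<xi> = m \<beta> (i \<alpha>)"
      have ia: "i \<alpha> \<in> ?T" "r (i \<alpha>) = x0" "d (i \<alpha>) = z" using inv a by auto
      have xi: "\<xi> \<in> ?T" "r \<xi> = y" "d \<xi> = z"
        using mcl[OF b(1) ia(1)] b ia unfolding \<xi>_def by auto
      have xr: "\<xi> \<in> red" unfolding red_def reduction_def using xi y z by simp
      have "(y, z) = (r \<xi>, d \<xi>)" using xi by simp
      then show "(y, z) \<in> (\<lambda>\<xi>. (r \<xi>, d \<xi>)) ` red" using xr by blast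
    qed
  qed
  have "homeomorphic_map (discrete_topology red) (discrete_topology (X0 \<times> X0)) (\<lambda>\<xi>. (r \<xi>, d \<xi>))"
    by (rule bijective_open_imp_homeomorphic_map)
       (use img inj in \<open>auto simp: open_map_into_discrete_topology\<close>)
  then show ?thesis
    unfolding red_def[symmetric] dred d0 prod_topology_discrete_topology[symmetric] .
qed

end
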